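(* Let $\Delta$ be a compact Hausdorff space, $u\colon\Delta\to\mathbb R$ continuous, $v\colon\Delta\to\mathbb R$ upper semicontinuous, and define $$f(\alpha)=\max_{\bm w\in\Delta}\{v(\bm w):u(\bm w)=\alpha\},\qquad \tau(q)=\min_{\bm w\in\Delta}\{q\,u(\bm w)-v(\bm w)\}$$ (the maximum over the empty set being $-\infty$). Then $f(\alpha)\le\tau^*(\alpha)$ for all $\alpha\in\mathbb R$, and if $\tau$ is supported at $(q,\alpha)$ for some $q\in\mathbb R$ then $f(\alpha)=q\alpha-\tau(q)=\tau^*(\alpha)$. Moreover the following are equivalent: (i) for all $q\in\mathbb R$ and all $\alpha\in\partial\tau(q)$, $\tau$ is supported at $(q,\alpha)$; (ii) $f(\alpha)=\tau^*(\alpha)$ for all $\alpha\in\mathbb R$; (iii) $f$ is a concave function.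
   Context: For $g\colon\mathbb R\to\mathbb R\cup\{-\infty\}$, the concave conjugate is $g^*(\alpha)=\inf_{q\in\mathbb R}(q\alpha-g(q))$. For concave $g$, $\partial g(q)=\{\alpha:\alpha(y-q)+g(q)\ge g(y)\ \forall y\in\mathbb R\}=[\partial^+g(q),\partial^-g(q)]$, where $\partial^\pm g(q)$ are the right/left derivatives. $\tau$ is supported at $(q,\alpha)$ if there is $\bm w\in\Delta$ with $\tau(q)=q\,u(\bm w)-v(\bm w)$ and $u(\bm w)=\alpha$. *)

theory Defs
  imports "HOL-Analysis.Analysis"
begin

definition usc_map :: "'a topology \<Rightarrow> ('a \<Rightarrow> real) \<Rightarrow> bool" where
  "usc_map X v \<longleftrightarrow> (\<forall>a. openin X {x \<in> topspace X. v x < a})"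

definition f_fun :: "'a topology \<Rightarrow> ('a \<Rightarrow> real) \<Rightarrow> ('a \<Rightarrow> real) \<Rightarrow> real \<Rightarrow> ereal" where
  "f_fun X u v \<alpha> = Sup ((\<lambda>w. ereal (v w)) ` {w \<in> topspace X. u w = \<alpha>})"

definition tau :: "'a topology \<Rightarrow> ('a \<Rightarrow> real) \<Rightarrow> ('a \<Rightarrow> real) \<Rightarrow> real \<Rightarrow> real" where
  "tau X u v q = Inf ((\<lambda>w. q * u w - v w) ` topspace X)"

definition concave_conj :: "(real \<Rightarrow> ereal) \<Rightarrow> real \<Rightarrow> ereal" where
  "concave_conj g \<alpha> = (INF q. ereal (q * \<alpha>) - g q)"

definition superdiff :: "(real \<Rightarrow> real) \<Rightarrow> real \<Rightarrow> real set" where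
  "superdiff g q = {\<alpha>. \<forall>y. \<alpha> * (y - q) + g q \<ge> g y}"

definition supported :: "'a topology \<Rightarrow> ('a \<Rightarrow> real) \<Rightarrow> ('a \<Rightarrow> real) \<Rightarrow> real \<Rightarrow> real \<Rightarrow> bool" where
  "supported X u v q \<alpha> \<longleftrightarrow>
     (\<exists>w \<in> topspace X. tau X u v q = q * u w - v w \<and> u w = \<alpha>)"

text \<open>Concavity of an extended-real-valued function R -> R u {-infinity}
  (with the usual ereal arithmetic, -infinity absorbs finite summands).\<close>
definition concave_ereal :: "(real \<Rightarrow> ereal) \<Rightarrow> bool" where
  "concave_ereal g \<longleftrightarrow>
     (\<forall>x y t. 0 \<le> t \<longrightarrow> t \<le> 1 \<longrightarrow>
        ereal t * g x + ereal (1 - t) * g y \<le> g (t * x + (1 - t) * y))"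

end

theory Submission
  imports Defs
begin

lemma small_le: fixes x y :: real assumes "\<And>n::nat. x \<le> y + 1/(real n+1)" shows "x \<le> y"
proof (rule ccontr)
  assume "\<not> x \<le> y"
  then have "0 < x - y" by simp
  then obtain n where "inverse (real (Suc n)) < x - y" using reals_Archimedean by blast
  moreover have "1/(real n+1) = inverse (real (Suc n))" by (simp add: inverse_eq_divide add.commute)
  ultimately show False using assms[of n] by linarith
qed

lemma nest_pred:
  assumes "compact_space X" and cl: "\<And>n. closedin X {w \<in> topspace X. P n w}"
    and ne: "\<And>n. \<exists>w\<in>topspace X. P n w" and mono: "\<And>n w. P (Suc n) w \<Longrightarrow> P n w"
  shows "\<exists>w\<in>topspace X. \<forall>n. P n w"
proof -
  let ?C = "\<lambda>n. {w \<in> topspace X. P n w}"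
  have dec: "decseq ?C"
  proof (rule decseq_SucI)
    fix n show "?C (Suc n) \<subseteq> ?C n"
    proof
      fix w assume "w \<in> ?C (Suc n)"
      then show "w \<in> ?C n" using mono[of n w] by simp
    qed
  qed
  have ne': "\<And>n. ?C n \<noteq> {}" using ne by blast
  have "(\<Inter>n. ?C n) \<noteq> {}" by (rule compact_space_imp_nest[OF assms(1) cl ne' dec])
  then show ?thesis by blast
qed

locale ctx =
  fixes X :: "'a topology" and u v :: "'a \<Rightarrow> real"
  assumes cpt: "compact_space X" and ne: "topspace X \<noteq> {}"
    and ucont: "continuous_map X euclideanreal u" and usc: "usc_map X v"
begin

lemma closed_le:
  assumes h: "continuous_map X euclideanreal h"
  shows "closedin X {w \<in> topspace X. h w \<le> v w}"
proof -
  have "openin X {w \<in> topspace X. v w < h w}"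
  proof (subst openin_subopen, intro ballI)
    fix w0 assume w0: "w0 \<in> {w \<in> topspace X. v w < h w}"
    define a where "a = (v w0 + h w0)/2"
    have o1: "openin X {w \<in> topspace X. v w < a}" using usc unfolding usc_map_def by blast
    have o2: "openin X {w \<in> topspace X. h w \<in> {a<..}}"
      by (rule openin_continuous_map_preimage[OF h]) auto
    show "\<exists>T. openin X T \<and> w0 \<in> T \<and> T \<subseteq> {w \<in> topspace X. v w < h w}"
    proof (intro exI conjI)
      show "openin X ({w \<in> topspace X. v w < a} \<inter> {w \<in> topspace X. h w \<in> {a<..}})"
        using o1 o2 by (rule openin_Int)
      show "w0 \<in> {w \<in> topspace X. v w < a} \<inter> {w \<in> topspace X. h w \<in> {a<..}}"
        using w0 by (simp add: a_def field_simps)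
      show "{w \<in> topspace X. v w < a} \<inter> {w \<in> topspace X. h w \<in> {a<..}} \<subseteq> {w \<in> topspace X. v w < h w}"
        by auto
    qed
  qed
  then have "closedin X (topspace X - {w \<in> topspace X. v w < h w})" by (rule closedin_diff[OF closedin_topspace])
  moreover have "topspace X - {w \<in> topspace X. v w < h w} = {w \<in> topspace X. h w \<le> v w}" by auto
  ultimately show ?thesis by simp
qed

lemma closed_u: "closedin X {w \<in> topspace X. \<bar>u w - a\<bar> \<le> e}"
proof -
  have "closedin X {w \<in> topspace X. u w \<in> {a-e..a+e}}"
    by (rule closedin_continuous_map_preimage[OF ucont]) auto
  moreover have "{w \<in> topspace X. u w \<in> {a-e..a+e}} = {w \<in> topspace X. \<bar>u w - a\<bar> \<le> e}" by auto
  ultimately show ?thesis by simp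
qed

lemma v_bdd: "\<exists>V. \<forall>w\<in>topspace X. v w \<le> V"
proof (rule ccontr)
  assume H: "\<not> ?thesis"
  have "\<exists>w\<in>topspace X. \<forall>n. real n \<le> v w"
  proof (rule nest_pred[OF cpt])
    fix n show "closedin X {w \<in> topspace X. real n \<le> v w}" by (rule closed_le) simp
    have "\<not> (\<forall>w\<in>topspace X. v w \<le> real n)" using H by blast
    then obtain w where "w \<in> topspace X" "\<not> v w \<le> real n" by blast
    then show "\<exists>w\<in>topspace X. real n \<le> v w" by force
  next
    fix n w assume "real (Suc n) \<le> v w" then show "real n \<le> v w" by simp
  qed
  then obtain w where "\<forall>n. real n \<le> v w" by blast
  moreover obtain n where "v w < real n" using reals_Archimedean2 by blast
  ultimately show False by (metis not_le)
qed

lemma u_bdd: "\<exists>B. \<forall>w\<in>topspace X. \<bar>u w\<bar> \<le> B"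
proof -
  have "compactin euclideanreal (u ` topspace X)"
    by (rule image_compactin[OF _ ucont]) (use cpt in \<open>simp add: compact_space_def\<close>)
  then have "bounded (u ` topspace X)" by (simp add: compact_imp_bounded)
  then show ?thesis by (auto simp: bounded_real)
qed


lemma cont_lin: "continuous_map X euclideanreal (\<lambda>w. q * u w - c)"
  by (intro continuous_intros ucont)

lemma tau_bdd: "bdd_below ((\<lambda>w. q * u w - v w) ` topspace X)"
proof -
  obtain V where V: "\<forall>w\<in>topspace X. v w \<le> V" using v_bdd by blast
  obtain B where B: "\<forall>w\<in>topspace X. \<bar>u w\<bar> \<le> B" using u_bdd by blast
  show ?thesis
  proof (rule bdd_belowI2)
    fix w assume w: "w \<in> topspace X"
    have "\<bar>q * u w\<bar> \<le> \<bar>q\<bar> * B" using B w by (simp add: abs_mult mult_left_mono)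
    then show "- (\<bar>q\<bar> * B) - V \<le> q * u w - v w" using V w by (auto simp: abs_le_iff)
  qed
qed

lemma tau_le: "w \<in> topspace X \<Longrightarrow> tau X u v q \<le> q * u w - v w"
  unfolding tau_def by (rule cInf_lower[OF imageI tau_bdd])

lemma tau_att: "\<exists>w\<in>topspace X. tau X u v q = q * u w - v w"
proof -
  have "\<exists>w\<in>topspace X. \<forall>n. q * u w - v w \<le> tau X u v q + 1/(real n+1)"
  proof (rule nest_pred[OF cpt])
    fix n
    have "closedin X {w \<in> topspace X. q * u w - (tau X u v q + 1/(real n+1)) \<le> v w}"
      by (rule closed_le[OF cont_lin])
    then show "closedin X {w \<in> topspace X. q * u w - v w \<le> tau X u v q + 1/(real n+1)}"
      by (simp add: algebra_simps)
    have "tau X u v q < tau X u v q + 1/(real n+1)" by simp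
    then have "\<exists>x\<in>(\<lambda>w. q * u w - v w) ` topspace X. x < tau X u v q + 1/(real n+1)"
      unfolding tau_def using cInf_less_iff[OF _ tau_bdd] ne by blast
    then show "\<exists>w\<in>topspace X. q * u w - v w \<le> tau X u v q + 1/(real n+1)"
      by (auto intro: less_imp_le)
  next
    fix n w assume "q * u w - v w \<le> tau X u v q + 1/(real (Suc n)+1)"
    moreover have "1/(real (Suc n)+1) \<le> 1/(real n+1)" by (simp add: frac_le)
    ultimately show "q * u w - v w \<le> tau X u v q + 1/(real n+1)" by linarith
  qed
  then obtain w where w: "w \<in> topspace X" "\<forall>n. q * u w - v w \<le> tau X u v q + 1/(real n+1)" by blast
  then have "q * u w - v w \<le> tau X u v q" using small_le by blast
  with tau_le[OF w(1), of q] w(1) show ?thesis by force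
qed

lemma tau_lip: "\<exists>B\<ge>0. \<forall>q q'. \<bar>tau X u v q - tau X u v q'\<bar> \<le> B * \<bar>q - q'\<bar>"
proof -
  obtain B where B: "\<forall>w\<in>topspace X. \<bar>u w\<bar> \<le> B" using u_bdd by blast
  obtain w0 where "w0 \<in> topspace X" using ne by blast
  then have "\<bar>u w0\<bar> \<le> B" using B by blast
  then have B0: "0 \<le> B" by linarith
  have one: "tau X u v q - tau X u v q' \<le> B * \<bar>q - q'\<bar>" for q q'
  proof -
    obtain w where w: "w \<in> topspace X" "tau X u v q' = q' * u w - v w" using tau_att by blast
    have "tau X u v q \<le> q * u w - v w" by (rule tau_le[OF w(1)])
    also have "\<dots> = tau X u v q' + (q - q') * u w" using w(2) by (simp add: algebra_simps)
    also have "(q - q') * u w \<le> \<bar>q - q'\<bar> * B"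
    proof -
      have "(q - q') * u w \<le> \<bar>(q - q') * u w\<bar>" by (rule abs_ge_self)
      also have "\<dots> = \<bar>q - q'\<bar> * \<bar>u w\<bar>" by (rule abs_mult)
      also have "\<dots> \<le> \<bar>q - q'\<bar> * B" using B w(1) by (simp add: mult_left_mono)
      finally show ?thesis .
    qed
    finally show ?thesis by (simp add: mult.commute)
  qed
  have "\<bar>tau X u v q - tau X u v q'\<bar> \<le> B * \<bar>q - q'\<bar>" for q q'
    using one[of q q'] one[of q' q] by (simp add: abs_le_iff abs_minus_commute)
  then show ?thesis using B0 by blast
qed

lemma tau_cont: "continuous_on S (tau X u v)"
proof -
  obtain B where B: "B \<ge> 0" "\<forall>q q'. \<bar>tau X u v q - tau X u v q'\<bar> \<le> B * \<bar>q - q'\<bar>" using tau_lip by blast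
  have "B-lipschitz_on S (tau X u v)"
    using B by (intro lipschitz_onI) (auto simp: dist_real_def)
  then show ?thesis by (rule lipschitz_on_continuous_on)
qed

lemma conj_eq: "concave_conj (\<lambda>q. ereal (tau X u v q)) \<alpha> = (INF q. ereal (q * \<alpha> - tau X u v q))"
  by (simp add: concave_conj_def)

lemma conj_le: "concave_conj (\<lambda>q. ereal (tau X u v q)) \<alpha> \<le> ereal (q * \<alpha> - tau X u v q)"
  unfolding conj_eq by (rule INF_lower) simp

lemma F_ge: "w \<in> topspace X \<Longrightarrow> u w = \<alpha> \<Longrightarrow> ereal (v w) \<le> f_fun X u v \<alpha>"
  unfolding f_fun_def by (rule SUP_upper) simp

lemma part1: "f_fun X u v \<alpha> \<le> concave_conj (\<lambda>q. ereal (tau X u v q)) \<alpha>"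
  unfolding f_fun_def conj_eq
proof (rule SUP_least, rule INF_greatest)
  fix w q assume "w \<in> {w \<in> topspace X. u w = \<alpha>}"
  then have w: "w \<in> topspace X" "u w = \<alpha>" by auto
  have "tau X u v q \<le> q * u w - v w" by (rule tau_le[OF w(1)])
  then show "ereal (v w) \<le> ereal (q * \<alpha> - tau X u v q)" using w(2) by simp
qed

lemma part2:
  assumes "supported X u v q \<alpha>"
  shows "f_fun X u v \<alpha> = ereal (q * \<alpha> - tau X u v q)
     \<and> ereal (q * \<alpha> - tau X u v q) = concave_conj (\<lambda>q. ereal (tau X u v q)) \<alpha>"
proof -
  obtain w where w: "w \<in> topspace X" "tau X u v q = q * u w - v w" "u w = \<alpha>"
    using assms unfolding supported_def by blast
  have a: "ereal (q * \<alpha> - tau X u v q) \<le> f_fun X u v \<alpha>"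
    using F_ge[OF w(1) w(3)] w by simp
  have b: "f_fun X u v \<alpha> \<le> concave_conj (\<lambda>q. ereal (tau X u v q)) \<alpha>" by (rule part1)
  have c: "concave_conj (\<lambda>q. ereal (tau X u v q)) \<alpha> \<le> ereal (q * \<alpha> - tau X u v q)" by (rule conj_le)
  show ?thesis using a b c by (meson antisym order_trans)
qed

lemma approxG:
  assumes H: "\<And>e. e > 0 \<Longrightarrow> \<exists>w\<in>topspace X. \<bar>u w - \<alpha>\<bar> \<le> e \<and> L - e \<le> v w"
  shows "\<exists>w\<in>topspace X. u w = \<alpha> \<and> L \<le> v w"
proof -
  have "\<exists>w\<in>topspace X. \<forall>n. \<bar>u w - \<alpha>\<bar> \<le> 1/(real n+1) \<and> L - 1/(real n+1) \<le> v w"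
  proof (rule nest_pred[OF cpt])
    fix n
    have "closedin X ({w \<in> topspace X. \<bar>u w - \<alpha>\<bar> \<le> 1/(real n+1)} \<inter> {w \<in> topspace X. (\<lambda>w. L - 1/(real n+1)) w \<le> v w})"
      by (intro closedin_Int closed_u closed_le) simp
    moreover have "{w \<in> topspace X. \<bar>u w - \<alpha>\<bar> \<le> 1/(real n+1)} \<inter> {w \<in> topspace X. (\<lambda>w. L - 1/(real n+1)) w \<le> v w}
       = {w \<in> topspace X. \<bar>u w - \<alpha>\<bar> \<le> 1/(real n+1) \<and> L - 1/(real n+1) \<le> v w}" by auto
    ultimately show "closedin X {w \<in> topspace X. \<bar>u w - \<alpha>\<bar> \<le> 1/(real n+1) \<and> L - 1/(real n+1) \<le> v w}" by simp
    have "(1::real)/(real n+1) > 0" by simp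
    then show "\<exists>w\<in>topspace X. \<bar>u w - \<alpha>\<bar> \<le> 1/(real n+1) \<and> L - 1/(real n+1) \<le> v w" by (rule H)
  next
    fix n w assume "\<bar>u w - \<alpha>\<bar> \<le> 1/(real (Suc n)+1) \<and> L - 1/(real (Suc n)+1) \<le> v w"
    moreover have "1/(real (Suc n)+1) \<le> 1/(real n+1)" by (simp add: frac_le)
    ultimately show "\<bar>u w - \<alpha>\<bar> \<le> 1/(real n+1) \<and> L - 1/(real n+1) \<le> v w" by linarith
  qed
  then obtain w where w: "w \<in> topspace X" "\<forall>n. \<bar>u w - \<alpha>\<bar> \<le> 1/(real n+1) \<and> L - 1/(real n+1) \<le> v w" by blast
  have "\<bar>u w - \<alpha>\<bar> \<le> 0" by (rule small_le) (use w(2) in simp)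
  moreover have "L \<le> v w" by (rule small_le) (use w(2) in \<open>simp add: algebra_simps\<close>)
  ultimately show ?thesis using w(1) by auto
qed

lemma F_att:
  assumes "f_fun X u v \<alpha> = ereal L"
  shows "\<exists>w\<in>topspace X. u w = \<alpha> \<and> v w = L"
proof -
  have "\<exists>w\<in>topspace X. u w = \<alpha> \<and> L \<le> v w"
  proof (rule approxG)
    fix e :: real assume "e > 0"
    then have "ereal (L - e) < f_fun X u v \<alpha>" using assms by simp
    then obtain w where "w \<in> topspace X" "u w = \<alpha>" "ereal (L - e) < ereal (v w)"
      unfolding f_fun_def less_Sup_iff by blast
    then show "\<exists>w\<in>topspace X. \<bar>u w - \<alpha>\<bar> \<le> e \<and> L - e \<le> v w" using \<open>e > 0\<close> by force
  qed
  then obtain w where w: "w \<in> topspace X" "u w = \<alpha>" "L \<le> v w" by blast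
  have "ereal (v w) \<le> ereal L" using F_ge[OF w(1) w(2)] assms by simp
  then show ?thesis using w by force
qed

lemma superdiff_left:
  assumes sd: "\<alpha> \<in> superdiff (tau X u v) q"
  shows "\<exists>w\<in>topspace X. tau X u v q = q * u w - v w \<and> u w \<le> \<alpha>"
proof (rule ccontr)
  assume "\<not> ?thesis"
  then have H: "\<And>w. w \<in> topspace X \<Longrightarrow> tau X u v q = q * u w - v w \<Longrightarrow> \<alpha> < u w" by force
  have "\<exists>c>0. \<forall>w\<in>topspace X. u w \<le> \<alpha> \<longrightarrow> tau X u v q + c \<le> q * u w - v w"
  proof (rule ccontr)
    assume H2: "\<not> ?thesis"
    have "\<exists>w\<in>topspace X. \<forall>n. u w \<le> \<alpha> \<and> q * u w - v w \<le> tau X u v q + 1/(real n+1)"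
    proof (rule nest_pred[OF cpt])
      fix n
      have c1: "closedin X {w \<in> topspace X. u w \<in> {..\<alpha>}}"
        by (rule closedin_continuous_map_preimage[OF ucont]) auto
      have c2: "closedin X {w \<in> topspace X. q * u w - (tau X u v q + 1/(real n+1)) \<le> v w}"
        by (rule closed_le[OF cont_lin])
      have "closedin X ({w \<in> topspace X. u w \<in> {..\<alpha>}} \<inter> {w \<in> topspace X. q * u w - (tau X u v q + 1/(real n+1)) \<le> v w})"
        using c1 c2 by (rule closedin_Int)
      moreover have "{w \<in> topspace X. u w \<in> {..\<alpha>}} \<inter> {w \<in> topspace X. q * u w - (tau X u v q + 1/(real n+1)) \<le> v w}
        = {w \<in> topspace X. u w \<le> \<alpha> \<and> q * u w - v w \<le> tau X u v q + 1/(real n+1)}" by auto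
      ultimately show "closedin X {w \<in> topspace X. u w \<le> \<alpha> \<and> q * u w - v w \<le> tau X u v q + 1/(real n+1)}" by simp
      have pos: "(1::real)/(real n+1) > 0" by simp
      have "\<not> (\<forall>w\<in>topspace X. u w \<le> \<alpha> \<longrightarrow> tau X u v q + 1/(real n+1) \<le> q * u w - v w)"
        using H2 pos by blast
      then obtain w where "w \<in> topspace X" "u w \<le> \<alpha>" "q * u w - v w < tau X u v q + 1/(real n+1)" by force
      then show "\<exists>w\<in>topspace X. u w \<le> \<alpha> \<and> q * u w - v w \<le> tau X u v q + 1/(real n+1)" by force
    next
      fix n w assume "u w \<le> \<alpha> \<and> q * u w - v w \<le> tau X u v q + 1/(real (Suc n)+1)"
      moreover have "1/(real (Suc n)+1) \<le> 1/(real n+1)" by (simp add: frac_le)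
      ultimately show "u w \<le> \<alpha> \<and> q * u w - v w \<le> tau X u v q + 1/(real n+1)" by linarith
    qed
    then obtain w where w: "w \<in> topspace X" "\<forall>n. u w \<le> \<alpha> \<and> q * u w - v w \<le> tau X u v q + 1/(real n+1)" by blast
    have "q * u w - v w \<le> tau X u v q" by (rule small_le) (use w(2) in blast)
    then have "tau X u v q = q * u w - v w" using tau_le[OF w(1), of q] by linarith
    then have "\<alpha> < u w" by (rule H[OF w(1)])
    then show False using w(2) by force
  qed
  then obtain c where c: "c > 0" "\<And>w. w \<in> topspace X \<Longrightarrow> u w \<le> \<alpha> \<Longrightarrow> tau X u v q + c \<le> q * u w - v w" by blast
  obtain B where B: "\<forall>w\<in>topspace X. \<bar>u w\<bar> \<le> B" using u_bdd by blast
  obtain w0 where "w0 \<in> topspace X" using ne by blast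
  then have "\<bar>u w0\<bar> \<le> B" using B by blast
  then have B0: "0 \<le> B" by linarith
  define K where "K = \<bar>\<alpha>\<bar> + B + 1"
  have K: "K > 0" using B0 by (simp add: K_def)
  define d where "d = c / K"
  have d: "d > 0" using c(1) K by (simp add: d_def)
  have dK: "d * K = c" using K by (simp add: d_def)
  have sup: "\<alpha> * ((q + d) - q) + tau X u v q \<ge> tau X u v (q + d)"
    using sd unfolding superdiff_def by blast
  obtain w1 where w1: "w1 \<in> topspace X" "tau X u v (q + d) = (q + d) * u w1 - v w1" using tau_att by blast
  have t1: "tau X u v (q + d) = (q * u w1 - v w1) + d * u w1" using w1(2) by (simp add: algebra_simps)
  show False
  proof (cases "\<alpha> < u w1")
    case True
    have "d * \<alpha> < d * u w1" using True d by simp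
    moreover have "tau X u v q \<le> q * u w1 - v w1" by (rule tau_le[OF w1(1)])
    ultimately show False using sup t1 by (simp add: algebra_simps)
  next
    case False
    then have le: "u w1 \<le> \<alpha>" by simp
    have "tau X u v q + c \<le> q * u w1 - v w1" by (rule c(2)[OF w1(1) le])
    moreover have "\<alpha> - u w1 \<le> \<bar>\<alpha>\<bar> + B" using B w1(1) by (auto simp: abs_le_iff)
    then have "d * (\<alpha> - u w1) \<le> d * (\<bar>\<alpha>\<bar> + B)" using d by (simp add: mult_left_mono)
    moreover have "d * (\<bar>\<alpha>\<bar> + B) < d * K" using d by (simp add: K_def)
    ultimately show False using sup t1 dK by (simp add: algebra_simps)
  qed
qed

lemma tau_neg: "tau X (\<lambda>w. - u w) v y = tau X u v (- y)"
  by (simp add: tau_def)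

lemma superdiff_right:
  assumes sd: "\<alpha> \<in> superdiff (tau X u v) q"
  shows "\<exists>w\<in>topspace X. tau X u v q = q * u w - v w \<and> \<alpha> \<le> u w"
proof -
  interpret n: ctx X "\<lambda>w. - u w" v
    by unfold_locales (use cpt ne ucont usc in \<open>auto intro: continuous_intros\<close>)
  have "- \<alpha> \<in> superdiff (tau X (\<lambda>w. - u w) v) (- q)"
    unfolding superdiff_def tau_neg
  proof (intro CollectI allI)
    fix y
    have "\<alpha> * (- y - q) + tau X u v q \<ge> tau X u v (- y)" using sd unfolding superdiff_def by blast
    then show "- \<alpha> * (y - (- q)) + tau X u v (- (- q)) \<ge> tau X u v (- y)" by (simp add: algebra_simps)
  qed
  then obtain w where "w \<in> topspace X" "tau X (\<lambda>w. - u w) v (- q) = - q * - u w - v w" "- u w \<le> - \<alpha>"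
    using n.superdiff_left by blast
  then show ?thesis unfolding tau_neg by auto
qed

lemma NA:
  assumes CL: "concave_conj (\<lambda>q. ereal (tau X u v q)) \<alpha> = ereal L"
    and na: "\<And>q. L < q * \<alpha> - tau X u v q"
  shows "\<exists>w\<in>topspace X. u w = \<alpha> \<and> L \<le> v w"
proof -
  define gg where "gg q = q * \<alpha> - tau X u v q" for q
  have Lle: "L \<le> gg q" for q using conj_le[of \<alpha> q] CL by (simp add: gg_def)
  have step1: "\<exists>q w. R \<le> \<bar>q\<bar> \<and> w \<in> topspace X \<and> tau X u v q = q * u w - v w \<and> 0 \<le> q * (u w - \<alpha>)" for R
  proof (rule ccontr)
    assume "\<not> ?thesis"
    then have H: "\<And>q w. R \<le> \<bar>q\<bar> \<Longrightarrow> w \<in> topspace X \<Longrightarrow> tau X u v q = q * u w - v w \<Longrightarrow> q * (u w - \<alpha>) < 0"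
      by force
    have R0: "R > 0"
    proof (rule ccontr)
      assume "\<not> R > 0"
      then have "R \<le> \<bar>0::real\<bar>" by simp
      obtain w where "w \<in> topspace X" "tau X u v 0 = 0 * u w - v w" using tau_att by blast
      from H[OF \<open>R \<le> \<bar>0::real\<bar>\<close> this] show False by simp
    qed
    obtain wR where wR: "wR \<in> topspace X" "tau X u v R = R * u wR - v wR" using tau_att by blast
    have "R * (u wR - \<alpha>) < 0" using H[OF _ wR] R0 by simp
    then have uR: "u wR - \<alpha> < 0" using R0 by (simp add: mult_less_0_iff)
    have right: "gg R \<le> gg y" if "R \<le> y" for y
    proof -
      have "tau X u v y \<le> y * u wR - v wR" by (rule tau_le[OF wR(1)])
      moreover have "R * (\<alpha> - u wR) \<le> y * (\<alpha> - u wR)" using that uR by (simp add: mult_right_mono)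
      ultimately show ?thesis using wR(2) by (simp add: gg_def algebra_simps)
    qed
    obtain wL where wL: "wL \<in> topspace X" "tau X u v (-R) = (-R) * u wL - v wL" using tau_att by blast
    have "(-R) * (u wL - \<alpha>) < 0" using H[OF _ wL] R0 by simp
    then have uL: "u wL - \<alpha> > 0" using R0 by (simp add: zero_less_mult_iff)
    have left: "gg (-R) \<le> gg y" if "y \<le> -R" for y
    proof -
      have "tau X u v y \<le> y * u wL - v wL" by (rule tau_le[OF wL(1)])
      moreover have "(-R) * (\<alpha> - u wL) \<le> y * (\<alpha> - u wL)" using mult_right_mono_neg[OF that, of "\<alpha> - u wL"] uL by simp
      ultimately show ?thesis using wL(2) by (simp add: gg_def algebra_simps)
    qed
    have cont: "continuous_on {-R..R} gg"
      unfolding gg_def by (intro continuous_intros tau_cont)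
    obtain q0 where q0: "q0 \<in> {-R..R}" "\<And>y. y \<in> {-R..R} \<Longrightarrow> gg q0 \<le> gg y"
      using continuous_attains_inf[OF compact_Icc _ cont] R0 by auto
    have all: "gg q0 \<le> gg y" for y
    proof -
      consider "y < -R" | "y \<in> {-R..R}" | "R < y" by force
      then show ?thesis
      proof cases
        case 1 then show ?thesis using left[of y] q0(2)[of "-R"] R0 by simp
      next
        case 2 then show ?thesis using q0(2) by blast
      next
        case 3 then show ?thesis using right[of y] q0(2)[of "R"] R0 by simp
      qed
    qed
    have "ereal (gg q0) \<le> concave_conj (\<lambda>q. ereal (tau X u v q)) \<alpha>"
      unfolding conj_eq by (rule INF_greatest) (use all in \<open>simp add: gg_def\<close>)
    then have "gg q0 \<le> L" using CL by simp
    then show False using na[of q0] by (simp add: gg_def)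
  qed
  define C where "C = gg 0 - L"
  have C0: "C \<ge> 0" using Lle[of 0] by (simp add: C_def)
  show ?thesis
  proof (rule approxG)
    fix e :: real assume e: "e > 0"
    obtain q w where qw: "C / e + 1 \<le> \<bar>q\<bar>" "w \<in> topspace X" "tau X u v q = q * u w - v w" "0 \<le> q * (u w - \<alpha>)"
      using step1[of "C / e + 1"] by blast
    have vw: "v w = gg q + q * (u w - \<alpha>)" using qw(3) by (simp add: gg_def algebra_simps)
    have vL: "L \<le> v w" using vw Lle[of q] qw(4) by linarith
    have "tau X u v 0 \<le> 0 * u w - v w" by (rule tau_le[OF qw(2)])
    then have "v w \<le> gg 0" by (simp add: gg_def)
    then have qC: "q * (u w - \<alpha>) \<le> C" using vw Lle[of q] by (simp add: C_def)
    have "\<bar>q\<bar> * \<bar>u w - \<alpha>\<bar> = q * (u w - \<alpha>)" using qw(4) by (simp add: abs_mult[symmetric])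
    then have dq: "\<bar>u w - \<alpha>\<bar> * \<bar>q\<bar> \<le> C" using qC by (simp add: mult.commute)
    have "C / e < \<bar>q\<bar>" using qw(1) by linarith
    then have eq: "C < e * \<bar>q\<bar>" using e by (simp add: pos_divide_less_eq mult.commute)
    have "\<bar>u w - \<alpha>\<bar> \<le> e"
    proof (rule ccontr)
      assume "\<not> \<bar>u w - \<alpha>\<bar> \<le> e"
      then have "e * \<bar>q\<bar> \<le> \<bar>u w - \<alpha>\<bar> * \<bar>q\<bar>" by (simp add: mult_right_mono)
      then show False using dq eq by linarith
    qed
    then show "\<exists>w\<in>topspace X. \<bar>u w - \<alpha>\<bar> \<le> e \<and> L - e \<le> v w" using qw(2) vL e by force
  qed
qed

lemma conj_concave: "concave_ereal (concave_conj (\<lambda>q. ereal (tau X u v q)))"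
  unfolding concave_ereal_def
proof (intro allI impI)
  fix x y t :: real assume t: "0 \<le> t" "t \<le> 1"
  show "ereal t * concave_conj (\<lambda>q. ereal (tau X u v q)) x + ereal (1 - t) * concave_conj (\<lambda>q. ereal (tau X u v q)) y
        \<le> concave_conj (\<lambda>q. ereal (tau X u v q)) (t * x + (1 - t) * y)"
    unfolding conj_eq[of "t * x + (1 - t) * y"]
  proof (rule INF_greatest)
    fix q assume "q \<in> (UNIV :: real set)"
    have a: "ereal t * concave_conj (\<lambda>q. ereal (tau X u v q)) x \<le> ereal t * ereal (q * x - tau X u v q)"
      by (rule ereal_mult_left_mono[OF conj_le]) (use t in simp)
    have b: "ereal (1 - t) * concave_conj (\<lambda>q. ereal (tau X u v q)) y \<le> ereal (1 - t) * ereal (q * y - tau X u v q)"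
      by (rule ereal_mult_left_mono[OF conj_le]) (use t in simp)
    have "ereal t * ereal (q * x - tau X u v q) + ereal (1 - t) * ereal (q * y - tau X u v q)
        = ereal (q * (t * x + (1 - t) * y) - tau X u v q)" by (simp add: algebra_simps)
    then show "ereal t * concave_conj (\<lambda>q. ereal (tau X u v q)) x + ereal (1 - t) * concave_conj (\<lambda>q. ereal (tau X u v q)) y
        \<le> ereal (q * (t * x + (1 - t) * y) - tau X u v q)" using add_mono[OF a b] by simp
  qed
qed

lemma sd_iff: "\<alpha> \<in> superdiff (tau X u v) q \<longleftrightarrow> (\<forall>y. q * \<alpha> - tau X u v q \<le> y * \<alpha> - tau X u v y)"
  unfolding superdiff_def by (auto simp: algebra_simps)

lemma C_at: "\<alpha> \<in> superdiff (tau X u v) q \<Longrightarrow> concave_conj (\<lambda>q. ereal (tau X u v q)) \<alpha> = ereal (q * \<alpha> - tau X u v q)"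
  by (rule antisym[OF conj_le]) (unfold conj_eq sd_iff, rule INF_greatest, simp)

lemma conj_le_F:
  assumes Hyp: "\<And>q. \<alpha> \<in> superdiff (tau X u v) q \<Longrightarrow> ereal (q * \<alpha> - tau X u v q) \<le> f_fun X u v \<alpha>"
  shows "concave_conj (\<lambda>q. ereal (tau X u v q)) \<alpha> \<le> f_fun X u v \<alpha>"
proof (cases "concave_conj (\<lambda>q. ereal (tau X u v q)) \<alpha>" rule: ereal_cases)
  case (real L)
  show ?thesis
  proof (cases "\<forall>q. L < q * \<alpha> - tau X u v q")
    case True
    then obtain w where w: "w \<in> topspace X" "u w = \<alpha>" "L \<le> v w" using NA[OF real] by blast
    have "ereal L \<le> ereal (v w)" using w(3) by simp
    also have "\<dots> \<le> f_fun X u v \<alpha>" by (rule F_ge[OF w(1) w(2)])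
    finally show ?thesis using real by simp
  next
    case False
    then obtain q where q: "q * \<alpha> - tau X u v q \<le> L" by (auto simp: not_less)
    have Lle: "L \<le> y * \<alpha> - tau X u v y" for y using conj_le[of \<alpha> y] real by simp
    have "\<alpha> \<in> superdiff (tau X u v) q" unfolding sd_iff using q Lle order_trans by blast
    then have "ereal (q * \<alpha> - tau X u v q) \<le> f_fun X u v \<alpha>" by (rule Hyp)
    moreover have "L = q * \<alpha> - tau X u v q" using q Lle[of q] by linarith
    ultimately show ?thesis using real by simp
  qed
next
  case PInf
  then show ?thesis using conj_le[of \<alpha> 0] by simp
next
  case MInf
  then show ?thesis by simp
qed

lemma concave_hyp:
  assumes cc: "concave_ereal (f_fun X u v)" and sd: "\<alpha> \<in> superdiff (tau X u v) q"
  shows "ereal (q * \<alpha> - tau X u v q) \<le> f_fun X u v \<alpha>"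
proof -
  obtain w1 where w1: "w1 \<in> topspace X" "tau X u v q = q * u w1 - v w1" "u w1 \<le> \<alpha>" using superdiff_left[OF sd] by blast
  obtain w2 where w2: "w2 \<in> topspace X" "tau X u v q = q * u w2 - v w2" "\<alpha> \<le> u w2" using superdiff_right[OF sd] by blast
  show ?thesis
  proof (cases "u w1 = \<alpha>")
    case True
    then show ?thesis using F_ge[OF w1(1) True] w1(2) True by simp
  next
    case False
    then have lt: "u w1 < \<alpha>" using w1(3) by simp
    define t where "t = (u w2 - \<alpha>) / (u w2 - u w1)"
    have pos: "u w2 - u w1 > 0" using lt w2(3) by simp
    have t0: "0 \<le> t" using pos w2(3) by (simp add: t_def)
    have t1: "t \<le> 1" using pos lt by (simp add: t_def)
    have e: "t * (u w2 - u w1) = u w2 - \<alpha>" using pos by (simp add: t_def)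
    have comb: "t * u w1 + (1 - t) * u w2 = \<alpha>"
      using e by (simp add: algebra_simps)
    have "ereal t * f_fun X u v (u w1) + ereal (1 - t) * f_fun X u v (u w2) \<le> f_fun X u v (t * u w1 + (1 - t) * u w2)"
      using cc t0 t1 unfolding concave_ereal_def by blast
    then have A: "ereal t * f_fun X u v (u w1) + ereal (1 - t) * f_fun X u v (u w2) \<le> f_fun X u v \<alpha>" using comb by simp
    have a: "ereal t * ereal (v w1) \<le> ereal t * f_fun X u v (u w1)"
      by (rule ereal_mult_left_mono[OF F_ge[OF w1(1) refl]]) (use t0 in simp)
    have b: "ereal (1 - t) * ereal (v w2) \<le> ereal (1 - t) * f_fun X u v (u w2)"
      by (rule ereal_mult_left_mono[OF F_ge[OF w2(1) refl]]) (use t1 in simp)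
    have "t * v w1 + (1 - t) * v w2 = q * (t * u w1 + (1 - t) * u w2) - tau X u v q"
    proof -
      have h: "v w1 = q * u w1 - tau X u v q" "v w2 = q * u w2 - tau X u v q" using w1(2) w2(2) by simp_all
      have "t * v w1 + (1 - t) * v w2 = t * (q * u w1 - tau X u v q) + (1 - t) * (q * u w2 - tau X u v q)"
        by (simp only: h)
      also have "\<dots> = q * (t * u w1 + (1 - t) * u w2) - tau X u v q" by (simp add: algebra_simps)
      finally show ?thesis .
    qed
    then have "ereal t * ereal (v w1) + ereal (1 - t) * ereal (v w2) = ereal (q * \<alpha> - tau X u v q)"
      using comb by simp
    then show ?thesis using add_mono[OF a b] A by (metis order_trans)
  qed
qed
end

theorem propositionp:
  fixes X :: "'a topology" and u v :: "'a \<Rightarrow> real"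
  assumes "compact_space X" and "Hausdorff_space X" and "topspace X \<noteq> {}"
    and "continuous_map X euclideanreal u"
    and "usc_map X v"
  shows "(\<forall>\<alpha>. f_fun X u v \<alpha> \<le> concave_conj (\<lambda>q. ereal (tau X u v q)) \<alpha>)
       \<and> (\<forall>q \<alpha>. supported X u v q \<alpha> \<longrightarrow>
            f_fun X u v \<alpha> = ereal (q * \<alpha> - tau X u v q)
          \<and> ereal (q * \<alpha> - tau X u v q) = concave_conj (\<lambda>q. ereal (tau X u v q)) \<alpha>)
       \<and> ((\<forall>q. \<forall>\<alpha> \<in> superdiff (tau X u v) q. supported X u v q \<alpha>)
            \<longleftrightarrow> (\<forall>\<alpha>. f_fun X u v \<alpha> = concave_conj (\<lambda>q. ereal (tau X u v q)) \<alpha>))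
       \<and> ((\<forall>\<alpha>. f_fun X u v \<alpha> = concave_conj (\<lambda>q. ereal (tau X u v q)) \<alpha>)
            \<longleftrightarrow> concave_ereal (f_fun X u v))"
proof -
  interpret ctx X u v using assms by unfold_locales auto
  have P1: "\<forall>\<alpha>. f_fun X u v \<alpha> \<le> concave_conj (\<lambda>q. ereal (tau X u v q)) \<alpha>" using part1 by blast
  have P2: "\<forall>q \<alpha>. supported X u v q \<alpha> \<longrightarrow>
            f_fun X u v \<alpha> = ereal (q * \<alpha> - tau X u v q)
          \<and> ereal (q * \<alpha> - tau X u v q) = concave_conj (\<lambda>q. ereal (tau X u v q)) \<alpha>"
    using part2 by blast
  have E1: "(\<forall>q. \<forall>\<alpha> \<in> superdiff (tau X u v) q. supported X u v q \<alpha>)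
            \<longleftrightarrow> (\<forall>\<alpha>. f_fun X u v \<alpha> = concave_conj (\<lambda>q. ereal (tau X u v q)) \<alpha>)"
  proof
    assume I: "\<forall>q. \<forall>\<alpha> \<in> superdiff (tau X u v) q. supported X u v q \<alpha>"
    show "\<forall>\<alpha>. f_fun X u v \<alpha> = concave_conj (\<lambda>q. ereal (tau X u v q)) \<alpha>"
    proof
      fix \<alpha>
      have "concave_conj (\<lambda>q. ereal (tau X u v q)) \<alpha> \<le> f_fun X u v \<alpha>"
      proof (rule conj_le_F)
        fix q assume "\<alpha> \<in> superdiff (tau X u v) q"
        then have "supported X u v q \<alpha>" using I by blast
        then show "ereal (q * \<alpha> - tau X u v q) \<le> f_fun X u v \<alpha>" using part2 by simp
      qed
      then show "f_fun X u v \<alpha> = concave_conj (\<lambda>q. ereal (tau X u v q)) \<alpha>" using part1 by (rule antisym[rotated])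
    qed
  next
    assume II: "\<forall>\<alpha>. f_fun X u v \<alpha> = concave_conj (\<lambda>q. ereal (tau X u v q)) \<alpha>"
    show "\<forall>q. \<forall>\<alpha> \<in> superdiff (tau X u v) q. supported X u v q \<alpha>"
    proof (intro allI ballI)
      fix q \<alpha> assume sd: "\<alpha> \<in> superdiff (tau X u v) q"
      have "f_fun X u v \<alpha> = ereal (q * \<alpha> - tau X u v q)" using II C_at[OF sd] by simp
      then obtain w where w: "w \<in> topspace X" "u w = \<alpha>" "v w = q * \<alpha> - tau X u v q" using F_att by blast
      then show "supported X u v q \<alpha>" unfolding supported_def by force
    qed
  qed
  have E2: "(\<forall>\<alpha>. f_fun X u v \<alpha> = concave_conj (\<lambda>q. ereal (tau X u v q)) \<alpha>)
            \<longleftrightarrow> concave_ereal (f_fun X u v)"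
  proof
    assume II: "\<forall>\<alpha>. f_fun X u v \<alpha> = concave_conj (\<lambda>q. ereal (tau X u v q)) \<alpha>"
    then have "f_fun X u v = concave_conj (\<lambda>q. ereal (tau X u v q))" by (intro ext) blast
    then show "concave_ereal (f_fun X u v)" using conj_concave by simp
  next
    assume cc: "concave_ereal (f_fun X u v)"
    show "\<forall>\<alpha>. f_fun X u v \<alpha> = concave_conj (\<lambda>q. ereal (tau X u v q)) \<alpha>"
    proof
      fix \<alpha>
      have "concave_conj (\<lambda>q. ereal (tau X u v q)) \<alpha> \<le> f_fun X u v \<alpha>"
        by (rule conj_le_F) (rule concave_hyp[OF cc])
      then show "f_fun X u v \<alpha> = concave_conj (\<lambda>q. ereal (tau X u v q)) \<alpha>" using part1 by (rule antisym[rotated])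
    qed
  qed
  show ?thesis using P1 P2 E1 E2 by blast
qed

end
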